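(* Let $E\in\mathcal{E}_n$ be an extreme point of $\mathcal{E}_n$ with $r=\mathrm{rank}(E)$, and let $u_1,\ldots,u_n\in\mathbb{R}^r$ satisfy $E=\mathrm{Gram}(u_1,\ldots,u_n)$ and $\mathrm{span}(u_1,\ldots,u_n)=\mathbb{R}^r$. Let $d\ge 1$ and let $Q_1,Q_2:\mathbb{R}^r\to\mathcal{H}_d$ be operator valued quadratic maps such that $Q_1(u_i)=Q_2(u_i)$ for all $i\in\{1,\ldots,n\}$. Then $Q_1=Q_2$.
   Context: $\mathcal{E}_n$ denotes the elliptope: the set of real symmetric positive semidefinite $n\times n$ matrices with all diagonal entries equal to $1$; an extreme point is a point not expressible as a proper convex combination of two distinct points of $\mathcal{E}_n$. $\mathrm{Gram}(u_1,\ldots,u_n)$ is the $n\times n$ matrix with entries $\langle u_i,u_j\rangle$ (standard inner product on $\mathbb{R}^r$). $\mathcal{H}_d$ is the real vector space of $d\times d$ complex Hermitian matrices. An operator valued quadratic map $Q:\mathbb{R}^r\to\mathcal{H}_d$ is a map of the form $Q(x)=\sum_{k,l=1}^r x_kx_l H_{kl}$ for some Hermitian matrices $H_{kl}\in\mathcal{H}_d$ (equivalently, every real coordinate of $Q$, viewing $\mathcal{H}_d\cong\mathbb{R}^{d^2}$, is a real quadratic form on $\mathbb{R}^r$). *)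

theory Defs
  imports "HOL-Analysis.Analysis"
begin

definition elliptope :: "(real^'n^'n) set" where
  "elliptope = {E. transpose E = E \<and> (\<forall>x. 0 \<le> x \<bullet> (E *v x)) \<and> (\<forall>i. E $ i $ i = 1)}"

definition hermitian :: "complex^'d^'d \<Rightarrow> bool" where
  "hermitian H \<longleftrightarrow> (\<forall>i j. H $ i $ j = cnj (H $ j $ i))"

definition op_quadratic_map :: "(real^'r \<Rightarrow> complex^'d^'d) \<Rightarrow> bool" where
  "op_quadratic_map Q \<longleftrightarrow> (\<exists>H :: 'r \<Rightarrow> 'r \<Rightarrow> complex^'d^'d.
      (\<forall>k l. hermitian (H k l)) \<and>
      (\<forall>x. Q x = (\<Sum>k\<in>UNIV. \<Sum>l\<in>UNIV. (x $ k * x $ l) *\<^sub>R H k l)))"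

end

theory Submission
  imports Defs "HOL-Analysis.Analysis"
begin

lemma key:
  fixes E :: "real^'n^'n" and u :: "'n \<Rightarrow> real^'r" and h :: "'r \<Rightarrow> 'r \<Rightarrow> real"
  assumes ext: "E extreme_point_of elliptope"
    and Eu: "\<forall>i j. E $ i $ j = u i \<bullet> u j"
    and sp: "span (range u) = UNIV"
    and z: "\<forall>i. (\<Sum>k\<in>UNIV. \<Sum>l\<in>UNIV. u i $ k * u i $ l * h k l) = 0"
  shows "(\<Sum>k\<in>UNIV. \<Sum>l\<in>UNIV. x $ k * x $ l * h k l) = 0"
proof -
  define G where "G x y = (\<Sum>k\<in>UNIV. \<Sum>l\<in>UNIV. x $ k * y $ l * h k l)" for x y :: "real^'r"
  have linL: "linear (\<lambda>x. G x y)" for y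
    by (rule linearI) (simp_all add: G_def algebra_simps sum.distrib sum_distrib_left)
  have linR: "linear (\<lambda>y. G x y)" for x
    by (rule linearI) (simp_all add: G_def algebra_simps sum.distrib sum_distrib_left)
  have Emem: "E \<in> elliptope" using ext by (simp add: extreme_point_of_def)
  show ?thesis
  proof (rule ccontr)
    assume nz: "(\<Sum>k\<in>UNIV. \<Sum>l\<in>UNIV. x $ k * x $ l * h k l) \<noteq> 0"
    have "\<exists>i j. G (u i) (u j) + G (u j) (u i) \<noteq> 0"
    proof (rule ccontr)
      assume "\<not> ?thesis"
      hence all0: "\<And>i j. G (u i) (u j) + G (u j) (u i) = 0" by blast
      have s1: "G y (u j) + G (u j) y = 0" for y j
        using linear_eq_0_on_span[of "\<lambda>y. G y (u j) + G (u j) y" "range u" y]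
          linear_compose_add[OF linL linR] all0 sp by auto
      have s2: "G y w + G w y = 0" for y w
        using linear_eq_0_on_span[of "\<lambda>w. G y w + G w y" "range u" w]
          linear_compose_add[OF linR linL] s1 sp by auto
      have "G x x = 0" using s2[of x x] by simp
      thus False using nz by (simp add: G_def)
    qed
    then obtain i0 j0 where ij: "G (u i0) (u j0) + G (u j0) (u i0) \<noteq> 0" by blast
    define F :: "real^'n^'n" where "F = (\<chi> i j. G (u i) (u j) + G (u j) (u i))"
    define C where "C = (\<Sum>k\<in>UNIV. \<Sum>l\<in>UNIV. \<bar>h k l\<bar>)"
    have C0: "C \<ge> 0" unfolding C_def by (intro sum_nonneg) auto
    define t where "t = 1 / (2*C+2)"
    have t0: "t > 0" using C0 by (simp add: t_def)
    have tC: "2 * t * C \<le> 1" using C0 by (simp add: t_def field_simps)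
    have Fne: "F \<noteq> 0" using ij by (auto simp: F_def vec_eq_iff)
    have Gsum: "G (\<Sum>i\<in>UNIV. y $ i *\<^sub>R u i) (\<Sum>j\<in>UNIV. y $ j *\<^sub>R u j)
        = (\<Sum>i\<in>UNIV. \<Sum>j\<in>UNIV. y $ i * y $ j * G (u i) (u j))" for y :: "real^'n"
    proof -
      have "G (\<Sum>i\<in>UNIV. y $ i *\<^sub>R u i) w = (\<Sum>i\<in>UNIV. y $ i * G (u i) w)" for w
        using linear_sum[OF linL[of w], of "\<lambda>i. y $ i *\<^sub>R u i" UNIV]
        by (simp add: o_def linear_cmul[OF linL])
      moreover have "G v (\<Sum>j\<in>UNIV. y $ j *\<^sub>R u j) = (\<Sum>j\<in>UNIV. y $ j * G v (u j))" for v
        using linear_sum[OF linR[of v], of "\<lambda>i. y $ i *\<^sub>R u i" UNIV]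
        by (simp add: o_def linear_cmul[OF linR])
      ultimately show ?thesis by (simp add: sum_distrib_left mult.assoc) (subst sum.swap, simp add: mult.left_commute)
    qed
    have quadE: "y \<bullet> (E *v y) = (\<Sum>i\<in>UNIV. y $ i *\<^sub>R u i) \<bullet> (\<Sum>j\<in>UNIV. y $ j *\<^sub>R u j)"
      for y :: "real^'n"
    proof -
      have "(\<Sum>i\<in>UNIV. y $ i *\<^sub>R u i) \<bullet> (\<Sum>j\<in>UNIV. y $ j *\<^sub>R u j)
          = (\<Sum>i\<in>UNIV. \<Sum>j\<in>UNIV. y $ i * y $ j * (u i \<bullet> u j))"
        by (simp add: inner_sum_left inner_sum_right sum_distrib_left mult.assoc)
          (subst sum.swap, simp add: mult.left_commute inner_commute)
      moreover have "y \<bullet> (E *v y) = (\<Sum>i\<in>UNIV. \<Sum>j\<in>UNIV. y $ i * y $ j * (u i \<bullet> u j))"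
        unfolding inner_vec_def[of y] matrix_vector_mult_def
        by (simp add: Eu sum_distrib_left mult.commute mult.left_commute)
      ultimately show ?thesis by simp
    qed
    have quadF: "y \<bullet> (F *v y) = 2 * G (\<Sum>i\<in>UNIV. y $ i *\<^sub>R u i) (\<Sum>j\<in>UNIV. y $ j *\<^sub>R u j)"
      for y :: "real^'n"
    proof -
      have "y \<bullet> (F *v y) = (\<Sum>i\<in>UNIV. \<Sum>j\<in>UNIV. y $ i * y $ j * G (u i) (u j))
          + (\<Sum>i\<in>UNIV. \<Sum>j\<in>UNIV. y $ i * y $ j * G (u j) (u i))"
        by (simp add: inner_vec_def matrix_vector_mult_def F_def sum_distrib_left
            sum.distrib algebra_simps)
      also have "(\<Sum>i\<in>UNIV. \<Sum>j\<in>UNIV. y $ i * y $ j * G (u j) (u i))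
          = (\<Sum>i\<in>UNIV. \<Sum>j\<in>UNIV. y $ i * y $ j * G (u i) (u j))"
        by (subst sum.swap) (simp add: mult.commute)
      finally show ?thesis by (simp add: Gsum)
    qed
    have bound: "\<bar>G w w\<bar> \<le> C * (w \<bullet> w)" for w
    proof -
      have "\<bar>G w w\<bar> \<le> (\<Sum>k\<in>UNIV. \<Sum>l\<in>UNIV. \<bar>w $ k * w $ l * h k l\<bar>)"
        unfolding G_def by (rule order_trans[OF sum_abs]) (intro sum_mono sum_abs)
      also have "\<dots> \<le> (\<Sum>k\<in>UNIV. \<Sum>l\<in>UNIV. (w \<bullet> w) * \<bar>h k l\<bar>)"
      proof (intro sum_mono)
        fix k l
        have "\<bar>w $ k * w $ l\<bar> \<le> norm w * norm w"
          unfolding abs_mult by (intro mult_mono component_le_norm_cart) auto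
        also have "\<dots> = w \<bullet> w" by (simp add: dot_square_norm power2_eq_square)
        finally show "\<bar>w $ k * w $ l * h k l\<bar> \<le> (w \<bullet> w) * \<bar>h k l\<bar>"
          unfolding abs_mult[of "w $ k * w $ l"] by (intro mult_right_mono) auto
      qed
      also have "\<dots> = C * (w \<bullet> w)" by (simp add: C_def sum_distrib_left mult.commute)
      finally show ?thesis .
    qed
    have mem: "E + s *\<^sub>R F \<in> elliptope" if s: "\<bar>s\<bar> \<le> t" for s
    proof -
      have symE: "transpose E = E" and diag: "\<And>i. E $ i $ i = 1"
        using Emem by (auto simp: elliptope_def)
      have "transpose (E + s *\<^sub>R F) = E + s *\<^sub>R F"
        using symE by (simp add: vec_eq_iff transpose_def F_def Eu inner_commute add.commute)
      moreover have "0 \<le> y \<bullet> ((E + s *\<^sub>R F) *v y)" for y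
      proof -
        define w where "w = (\<Sum>i\<in>UNIV. y $ i *\<^sub>R u i)"
        have "y \<bullet> ((E + s *\<^sub>R F) *v y) = y \<bullet> (E *v y) + s * (y \<bullet> (F *v y))"
          by (simp add: inner_vec_def matrix_vector_mult_def sum.distrib sum_distrib_left
              algebra_simps)
        also have "\<dots> = w \<bullet> w + 2 * s * G w w" by (simp add: quadE quadF w_def)
        finally have eq: "y \<bullet> ((E + s *\<^sub>R F) *v y) = w \<bullet> w + 2 * s * G w w" .
        have "\<bar>2 * s * G w w\<bar> \<le> 2 * t * (C * (w \<bullet> w))"
          unfolding abs_mult using s bound[of w] t0
          by (intro mult_mono) auto
        also have "\<dots> \<le> w \<bullet> w" using tC mult_right_mono[OF tC, of "w \<bullet> w"] by (simp add: mult.assoc)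
        finally show ?thesis unfolding eq by linarith
      qed
      moreover have "(E + s *\<^sub>R F) $ i $ i = 1" for i
        using diag z by (simp add: F_def G_def)
      ultimately show ?thesis by (simp add: elliptope_def)
    qed
    have "E = midpoint (E - t *\<^sub>R F) (E + t *\<^sub>R F)"
    proof -
      have "(E - t *\<^sub>R F) + (E + t *\<^sub>R F) = 2 *\<^sub>R E" by (simp add: scaleR_2)
      thus ?thesis unfolding midpoint_def by simp
    qed
    moreover have "E - t *\<^sub>R F \<noteq> E + t *\<^sub>R F"
    proof -
      have "(E - t *\<^sub>R F) $ i0 $ j0 \<noteq> (E + t *\<^sub>R F) $ i0 $ j0"
        using ij t0 by (simp add: F_def)
      thus ?thesis by metis
    qed
    ultimately have "E \<in> open_segment (E - t *\<^sub>R F) (E + t *\<^sub>R F)"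
      using midpoint_in_open_segment by metis
    moreover have "E - t *\<^sub>R F \<in> elliptope" using mem[of "-t"] t0 by simp
    moreover have "E + t *\<^sub>R F \<in> elliptope" using mem[of t] t0 by simp
    ultimately show False using ext by (auto simp: extreme_point_of_def)
  qed
qed
lemma entry_form:
  assumes "\<forall>x. Q x = (\<Sum>k\<in>UNIV. \<Sum>l\<in>UNIV. (x $ k * x $ l) *\<^sub>R H k l)"
  shows "Re (Q x $ a $ b) = (\<Sum>k\<in>UNIV. \<Sum>l\<in>UNIV. x $ k * x $ l * Re (H k l $ a $ b))"
    and "Im (Q x $ a $ b) = (\<Sum>k\<in>UNIV. \<Sum>l\<in>UNIV. x $ k * x $ l * Im (H k l $ a $ b))"
  using assms by (simp_all add: sum_component Re_sum Im_sum)

theorem theorem2p3: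
  fixes E :: "real^'n^'n"
    and u :: "'n \<Rightarrow> real^'r"
    and Q1 Q2 :: "real^'r \<Rightarrow> complex^'d^'d"
  assumes "E extreme_point_of elliptope"
    and "CARD('r) = rank E"
    and "\<forall>i j. E $ i $ j = u i \<bullet> u j"
    and "span (range u) = UNIV"
    and "op_quadratic_map Q1"
    and "op_quadratic_map Q2"
    and "\<forall>i. Q1 (u i) = Q2 (u i)"
  shows "Q1 = Q2"
proof -
  obtain H1 where H1: "\<forall>x. Q1 x = (\<Sum>k\<in>UNIV. \<Sum>l\<in>UNIV. (x $ k * x $ l) *\<^sub>R H1 k l)"
    using assms(5) unfolding op_quadratic_map_def by blast
  obtain H2 where H2: "\<forall>x. Q2 x = (\<Sum>k\<in>UNIV. \<Sum>l\<in>UNIV. (x $ k * x $ l) *\<^sub>R H2 k l)"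
    using assms(6) unfolding op_quadratic_map_def by blast
  have "Q1 x $ a $ b = Q2 x $ a $ b" for x a b
  proof -
    have re: "Re (Q1 y $ a $ b) - Re (Q2 y $ a $ b) = (\<Sum>k\<in>UNIV. \<Sum>l\<in>UNIV. y $ k * y $ l *
        (Re (H1 k l $ a $ b) - Re (H2 k l $ a $ b)))" for y
      by (simp add: entry_form[OF H1] entry_form[OF H2] algebra_simps sum_subtractf)
    have im: "Im (Q1 y $ a $ b) - Im (Q2 y $ a $ b) = (\<Sum>k\<in>UNIV. \<Sum>l\<in>UNIV. y $ k * y $ l *
        (Im (H1 k l $ a $ b) - Im (H2 k l $ a $ b)))" for y
      by (simp add: entry_form[OF H1] entry_form[OF H2] algebra_simps sum_subtractf)
    have "Re (Q1 x $ a $ b) - Re (Q2 x $ a $ b) = 0"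
      unfolding re by (rule key[OF assms(1) assms(3) assms(4)]) (simp add: re[symmetric] assms(7))
    moreover have "Im (Q1 x $ a $ b) - Im (Q2 x $ a $ b) = 0"
      unfolding im by (rule key[OF assms(1) assms(3) assms(4)]) (simp add: im[symmetric] assms(7))
    ultimately show ?thesis by (simp add: complex_eq_iff)
  qed
  thus ?thesis by (simp add: fun_eq_iff vec_eq_iff)
qed
end
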